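(* Let $a>0$. Then $$\int_0^1 g_a(x)\,dx=1-\sum_{n\ge1}\frac{\Gamma(an+1)\,\Gamma(an+n-1)}{\Gamma(an+n+2)\,\Gamma(an)}=1-\frac{a}{2(a+1)}-\frac{a\pi}{2(a+1)^2}\cot\frac{a\pi}{a+1}.$$
   Context: For $a>0$ let $\phi_a(x)=x^a-x^{a+1}$ on $[0,1]$, strictly increasing on $[0,x_0]$ and strictly decreasing on $[x_0,1]$ with $x_0=a/(a+1)$. Let $r_a$ be the restriction of $\phi_a$ to $[x_0,1]$, and define $g_a(x)=r_a^{-1}(\phi_a(x))$ for $0\le x\le 1$. *)

theory Defs
  imports "HOL-Analysis.Analysis"
begin

definition phi :: "real \<Rightarrow> real \<Rightarrow> real" where
  "phi a x = x powr a - x powr (a + 1)"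

definition x0 :: "real \<Rightarrow> real" where
  "x0 a = a / (a + 1)"

definition g :: "real \<Rightarrow> real \<Rightarrow> real" where
  "g a x = (THE y. y \<in> {x0 a..1} \<and> phi a y = phi a x)"

end

theory Submission
  imports Defs
begin


lemma Gamma_reflection_real: "Gamma (z::real) * Gamma (1 - z) = pi / sin (pi * z)"
proof -
  have "complex_of_real (Gamma z * Gamma (1-z)) = complex_of_real (pi / sin (pi*z))"
    using Gamma_reflection_complex[of "complex_of_real z"]
    by (simp add: Gamma_complex_of_real[symmetric] sin_of_real[symmetric])
  thus ?thesis by (simp only: of_real_eq_iff)
qed

lemma Digamma_reflection_real:
  assumes z: "0 < z" "z < (1::real)"
  shows "Digamma (1 - z) - Digamma z = pi * cot (pi * z)"
proof -
  define F where "F x = Gamma x * Gamma (1 - x) * sin (pi * x)" for x::real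
  have nz1: "z \<notin> \<int>\<^sub>\<le>\<^sub>0" using z by (auto elim!: nonpos_Ints_cases)
  have nz2: "1 - z \<notin> \<int>\<^sub>\<le>\<^sub>0" using z by (auto elim!: nonpos_Ints_cases)
  have d1: "(F has_field_derivative (Gamma z * Digamma z * Gamma (1-z) * sin (pi*z)
      - Gamma z * (Gamma (1-z) * Digamma (1-z)) * sin (pi*z) + Gamma z * Gamma (1-z) * (cos (pi*z) * pi))) (at z)"
    unfolding F_def using nz1 nz2
    by (auto intro!: derivative_eq_intros simp: algebra_simps)
  have sinpos: "sin (pi * x) > 0" if "0 < x" "x < 1" for x
    using that by (intro sin_gt_zero) auto
  have "((\<lambda>_. pi) has_field_derivative 0) (at z)" by simp
  hence d2: "(F has_field_derivative 0) (at z)"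
  proof (rule has_field_derivative_transform_within_open[where S="{0<..<1}"])
    show "open {0<..<(1::real)}" by simp
    show "z \<in> {0<..<1}" using z by simp
    fix x :: real assume "x \<in> {0<..<1}"
    hence x: "0 < x" "x < 1" by auto
    show "pi = F x" unfolding F_def using Gamma_reflection_real[of x] sinpos[OF x] by simp
  qed
  have eq: "Gamma z * Digamma z * Gamma (1-z) * sin (pi*z)
      - Gamma z * (Gamma (1-z) * Digamma (1-z)) * sin (pi*z) + Gamma z * Gamma (1-z) * (cos (pi*z) * pi) = 0"
    using DERIV_unique[OF d1 d2] .
  have g1: "Gamma z > 0" "Gamma (1-z) > 0" using z by auto
  have "Gamma z * Gamma (1-z) * ((Digamma z - Digamma (1-z)) * sin (pi*z) + cos (pi*z) * pi) = 0"
    using eq by (simp add: algebra_simps)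
  hence "(Digamma z - Digamma (1-z)) * sin (pi*z) + cos (pi*z) * pi = 0" using g1 by simp
  thus ?thesis using sinpos[OF z] by (simp add: cot_def field_simps)
qed

lemma p_sums:
  assumes a: "a > (0::real)"
  shows "(\<lambda>k. 1 / ((a+1) * real k + 1) - 1 / ((a+1) * real k + a)) sums (pi * cot (pi / (a+1)) / (a+1))"
proof -
  define c where "c = a + 1"
  define z where "z = 1 / c"
  have c: "c > 1" using a by (simp add: c_def)
  have z: "0 < z" "z < 1" using c by (auto simp: z_def)
  have s1: "(\<lambda>k. inverse (real (Suc k)) - inverse (z + real k)) sums (Digamma z + euler_mascheroni)"
    using summable_Digamma[of z] z by (simp add: Digamma_def summable_sums)
  have s2: "(\<lambda>k. inverse (real (Suc k)) - inverse ((1-z) + real k)) sums (Digamma (1-z) + euler_mascheroni)"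
    using summable_Digamma[of "1-z"] z by (simp add: Digamma_def summable_sums)
  have "(\<lambda>k. ((inverse (real (Suc k)) - inverse ((1-z) + real k)) - (inverse (real (Suc k)) - inverse (z + real k))) / c)
       sums ((Digamma (1-z) + euler_mascheroni - (Digamma z + euler_mascheroni)) / c)"
    by (intro sums_divide sums_diff s1 s2)
  also have "(Digamma (1-z) + euler_mascheroni - (Digamma z + euler_mascheroni)) / c = pi * cot (pi / c) / c"
    using Digamma_reflection_real[OF z] by (simp add: z_def)
  also have "(\<lambda>k. ((inverse (real (Suc k)) - inverse ((1-z) + real k)) - (inverse (real (Suc k)) - inverse (z + real k))) / c)
      = (\<lambda>k. 1 / (c * real k + 1) - 1 / (c * real k + a))"
  proof
    fix k
    have "z + real k > 0" "1 - z + real k > 0" using z by auto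
    moreover have "c * real k + 1 > 0" "c * real k + a > 0" using c a by (auto intro: add_nonneg_pos)
    ultimately have e1: "inverse (z + real k) / c = 1 / (c * real k + 1)"
      and e2: "inverse (1 - z + real k) / c = 1 / (c * real k + a)"
    proof -
      have q1: "z + real k = (c * real k + 1) / c" using c by (simp add: z_def field_simps)
      have q2: "1 - z + real k = (c * real k + a) / c" using c by (simp add: z_def c_def field_simps)
      have p: "c * real k + 1 > 0" "c * real k + a > 0" using c a by (auto intro: add_nonneg_pos)
      show "inverse (z + real k) / c = 1 / (c * real k + 1)" using c p unfolding q1 by (simp add: divide_simps)
      show "inverse (1 - z + real k) / c = 1 / (c * real k + a)" using c p unfolding q2 by (simp add: divide_simps)
    qed
    show "((inverse (real (Suc k)) - inverse ((1-z) + real k)) - (inverse (real (Suc k)) - inverse (z + real k))) / c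
       = 1 / (c * real k + 1) - 1 / (c * real k + a)"
      using e1 e2 by (simp add: diff_divide_distrib)
  qed
  finally show ?thesis by (simp add: c_def)
qed




definition Yf :: "real \<Rightarrow> real \<Rightarrow> real" where
  "Yf a w = (if w = 1 then a / (a+1) else (1 - w powr a) / (1 - w powr (a+1)))"

lemma powr_a1: "0 \<le> (w::real) \<Longrightarrow> w powr (a+1) = w powr a * w"
  by (cases "w = 0") (simp_all add: powr_add)

lemma phi_alt: "0 \<le> x \<Longrightarrow> phi a x = x powr a * (1 - x)"
  using powr_a1[of x a] by (simp add: phi_def algebra_simps)

lemma powr_lt1: "0 \<le> (w::real) \<Longrightarrow> w < 1 \<Longrightarrow> 0 < p \<Longrightarrow> w powr p < 1"
  by (metis powr_less_mono2 powr_one_eq_one)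

lemma phi_decr:
  assumes a: "a > 0" and xy: "x0 a \<le> x" "x < y" "y \<le> 1"
  shows "phi a y < phi a x"
proof -
  have x0p: "x0 a > 0" using a by (simp add: x0_def)
  show ?thesis
  proof (rule DERIV_neg_imp_decreasing_open[of x y])
    show "x < y" by fact
    fix t assume t: "x < t" "t < y"
    hence tp: "t > 0" "t > x0 a" using x0p xy by auto
    have "DERIV (phi a) t :> a * t powr (a-1) - (a+1) * t powr (a + 1 - 1)"
      unfolding phi_def[abs_def] using tp by (intro derivative_intros has_real_derivative_powr)
    moreover have "a * t powr (a-1) - (a+1) * t powr (a + 1 - 1) < 0"
    proof -
      have e: "t powr (a + 1 - 1) = t powr (a-1) * t" using tp
        by (metis add_diff_cancel_right' diff_add_cancel powr_a1 less_imp_le)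
      have "(a+1) * t > a" using tp a by (simp add: x0_def field_simps)
      moreover have "t powr (a-1) > 0" using tp by simp
      ultimately have "t powr (a-1) * (a - (a+1)*t) < 0" by (intro mult_pos_neg) auto
      moreover have "a * t powr (a-1) - (a+1) * (t powr (a-1) * t) = t powr (a-1) * (a - (a+1)*t)"
        by (simp add: algebra_simps)
      ultimately show ?thesis unfolding e by simp
    qed
    ultimately show "\<exists>y. DERIV (phi a) t :> y \<and> y < 0" by blast
  next
    have "\<forall>t\<in>{x..y}. t > 0" using x0p xy by auto
    thus "continuous_on {x..y} (phi a)"
      unfolding phi_def[abs_def] by (intro continuous_intros) auto
  qed
qed

lemma phi_inj:
  assumes a: "a > 0" and "x0 a \<le> y1" "y1 \<le> 1" "x0 a \<le> y2" "y2 \<le> 1" "phi a y1 = phi a y2"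
  shows "y1 = y2"
  using phi_decr[OF a, of y1 y2] phi_decr[OF a, of y2 y1] assms
  by (cases y1 y2 rule: linorder_cases) auto

lemma g_eqI:
  assumes a: "a > 0" and "x0 a \<le> y" "y \<le> 1" "phi a y = phi a x"
  shows "g a x = y"
  unfolding g_def
proof (rule the_equality)
  show "y \<in> {x0 a..1} \<and> phi a y = phi a x" using assms by auto
  fix y' assume "y' \<in> {x0 a..1} \<and> phi a y' = phi a x"
  thus "y' = y" using phi_inj[OF a, of y' y] assms by auto
qed

lemma g_right: "a > 0 \<Longrightarrow> x0 a \<le> x \<Longrightarrow> x \<le> 1 \<Longrightarrow> g a x = x"
  by (rule g_eqI) auto

lemma Yf_le1:
  assumes a: "a > 0" and w: "0 \<le> w" "w \<le> 1"
  shows "Yf a w \<le> 1"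
proof (cases "w = 1")
  case False
  hence w1: "w < 1" using w by auto
  have d: "1 - w powr (a+1) > 0" using powr_lt1[OF w(1) w1, of "a+1"] a by simp
  have "w powr a * w \<le> w powr a" using w by (simp add: mult_left_le)
  thus ?thesis using False d w(1) by (simp add: Yf_def powr_a1 divide_le_eq_1)
qed (use a in \<open>simp add: Yf_def\<close>)

lemma Yf_ge:
  assumes a: "a > 0" and w: "0 \<le> w" "w \<le> 1"
  shows "x0 a \<le> Yf a w"
proof (cases "w = 1")
  case False
  hence w1: "w < 1" using w by auto
  have d: "1 - w powr (a+1) > 0" using powr_lt1[OF w(1) w1, of "a+1"] a by simp
  define k where "k t = 1 - (a+1) * t powr a + a * t powr (a+1)" for t
  have "k w \<ge> k 1"
  proof (cases "w = 0")
    case True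
    thus ?thesis using a by (simp add: k_def)
  next
    case False
    hence wp: "w > 0" using w by auto
    show ?thesis
    proof (rule DERIV_nonpos_imp_nonincreasing[of w 1 k])
      show "w \<le> 1" by fact
      fix t assume t: "w \<le> t" "t \<le> 1"
      hence tp: "t > 0" using wp by auto
      have "DERIV k t :> 0 - (a+1) * (a * t powr (a-1)) + a * ((a+1) * t powr (a + 1 - 1))"
        unfolding k_def using tp by (intro derivative_intros DERIV_cmult has_real_derivative_powr)
      moreover have "0 - (a+1) * (a * t powr (a-1)) + a * ((a+1) * t powr (a + 1 - 1)) \<le> 0"
      proof -
        have e: "t powr (a + 1 - 1) = t powr (a-1) * t" using tp
          by (metis add_diff_cancel_right' diff_add_cancel powr_a1 less_imp_le)
        have "0 - (a+1) * (a * t powr (a-1)) + a * ((a+1) * t powr (a + 1 - 1))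
              = a * (a+1) * t powr (a-1) * (t - 1)" unfolding e by (simp add: algebra_simps)
        moreover have "a * (a+1) * t powr (a-1) \<ge> 0" using a by simp
        ultimately show ?thesis using t by (simp add: mult_nonneg_nonpos)
      qed
      ultimately show "\<exists>y. DERIV k t :> y \<and> y \<le> 0" by blast
    qed
  qed
  hence "k w \<ge> 0" by (simp add: k_def)
  hence "a * (1 - w powr (a+1)) \<le> (a+1) * (1 - w powr a)" by (simp add: k_def algebra_simps)
  moreover have "a + 1 > 0" using a by simp
  ultimately have "a / (a+1) \<le> (1 - w powr a) / (1 - w powr (a+1))"
    using d by (simp add: divide_simps mult.commute)
  thus ?thesis using False by (simp add: Yf_def x0_def)
qed (use a in \<open>simp add: Yf_def x0_def\<close>)

lemma Yf_pos: "a > 0 \<Longrightarrow> 0 \<le> w \<Longrightarrow> w \<le> 1 \<Longrightarrow> 0 < Yf a w"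
proof -
  assume a: "a > 0" and w: "0 \<le> w" "w \<le> 1"
  have "x0 a > 0" using a by (simp add: x0_def)
  thus ?thesis using Yf_ge[OF a w] by linarith
qed

lemma phi_XY:
  assumes a: "a > 0" and w: "0 \<le> w" "w \<le> 1"
  shows "phi a (w * Yf a w) = phi a (Yf a w)"
proof (cases "w = 1")
  case False
  hence w1: "w < 1" using w by auto
  have d: "1 - w powr (a+1) > 0" using powr_lt1[OF w(1) w1, of "a+1"] a by simp
  define y where "y = Yf a w"
  have y0: "y > 0" using Yf_pos[OF a w] by (simp add: y_def)
  have yeq: "y * (1 - w powr a * w) = 1 - w powr a"
    using False d w(1) by (simp add: y_def Yf_def powr_a1)
  have "phi a (w * y) = w powr a * y powr a * (1 - w * y)"
    using w y0 by (simp add: phi_alt powr_mult)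
  also have "w powr a * (1 - w * y) = 1 - y" using yeq by (simp add: algebra_simps)
  hence "w powr a * y powr a * (1 - w * y) = y powr a * (1 - y)"
    by (metis mult.assoc mult.commute)
  also have "\<dots> = phi a y" using y0 by (simp add: phi_alt)
  finally show ?thesis by (simp add: y_def)
qed simp

lemma X_le:
  assumes a: "a > 0" and w: "0 \<le> w" "w \<le> 1"
  shows "w * Yf a w \<le> x0 a"
proof (rule ccontr)
  assume "\<not> ?thesis"
  hence gt: "w * Yf a w > x0 a" by simp
  have "w * Yf a w \<le> 1" using Yf_le1[OF a w] Yf_pos[OF a w] w
    by (simp add: mult_le_one)
  hence "w * Yf a w = Yf a w"
    using phi_inj[OF a, of "w * Yf a w" "Yf a w"] gt Yf_ge[OF a w] Yf_le1[OF a w] phi_XY[OF a w] by auto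
  hence "w = 1" using Yf_pos[OF a w] by simp
  thus False using gt a by (simp add: Yf_def x0_def)
qed

lemma g_X: "a > 0 \<Longrightarrow> 0 \<le> w \<Longrightarrow> w \<le> 1 \<Longrightarrow> g a (w * Yf a w) = Yf a w"
  using g_eqI[of a "Yf a w" "w * Yf a w"] Yf_ge Yf_le1 phi_XY by metis




definition Yd :: "real \<Rightarrow> real \<Rightarrow> real" where
  "Yd a w = ((0 - a * w powr (a-1)) * (1 - w powr (a+1)) - (1 - w powr a) * (0 - (a+1) * w powr (a+1-1)))
       / ((1 - w powr (a+1)) * (1 - w powr (a+1)))"

lemma Yf_tendsto_lt1:
  assumes a: "a > 0" and x: "0 \<le> x" "x < 1"
  shows "(Yf a \<longlongrightarrow> Yf a x) (at x within {0..1})"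
proof -
  have ev: "eventually (\<lambda>w. w \<ge> 0) (at x within {0..1})" by (auto simp: eventually_at_filter)
  have d: "1 - x powr (a+1) \<noteq> 0" using powr_lt1[OF x, of "a+1"] a by simp
  have "((\<lambda>w. (1 - w powr a) / (1 - w powr (a+1))) \<longlongrightarrow> (1 - x powr a) / (1 - x powr (a+1))) (at x within {0..1})"
    by (intro tendsto_intros d) (use ev a in auto)
  moreover have "eventually (\<lambda>w. (1 - w powr a) / (1 - w powr (a+1)) = Yf a w) (at x within {0..1})"
  proof -
    have "eventually (\<lambda>w. w \<in> {..<1}) (nhds x)" using x by (intro eventually_nhds_in_open) auto
    hence "eventually (\<lambda>w. w \<in> {..<1}) (at x within {0..1})"
      by (simp add: eventually_at_filter eventually_mono)
    thus ?thesis by eventually_elim (auto simp: Yf_def)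
  qed
  ultimately have "(Yf a \<longlongrightarrow> (1 - x powr a) / (1 - x powr (a+1))) (at x within {0..1})"
    by (rule Lim_transform_eventually)
  thus ?thesis using x by (simp add: Yf_def)
qed

lemma Yf_tendsto_1:
  assumes a: "a > 0"
  shows "(Yf a \<longlongrightarrow> Yf a 1) (at 1 within {0..1})"
proof -
  have "((\<lambda>w. w powr p) has_field_derivative p * 1 powr (p - 1)) (at 1)" for p :: real
    by (rule has_real_derivative_powr) simp
  hence q: "((\<lambda>y. (y powr p - 1) / (y - 1)) \<longlongrightarrow> p) (at 1)" for p :: real
    unfolding has_field_derivative_iff by simp
  have "((\<lambda>y. ((y powr a - 1) / (y - 1)) / ((y powr (a+1) - 1) / (y - 1))) \<longlongrightarrow> a / (a+1)) (at 1)"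
    using a by (intro tendsto_divide q) auto
  hence "((\<lambda>y. ((y powr a - 1) / (y - 1)) / ((y powr (a+1) - 1) / (y - 1))) \<longlongrightarrow> a / (a+1)) (at 1 within {0..1})"
    by (rule tendsto_within_subset) simp
  moreover have "eventually (\<lambda>y. ((y powr a - 1) / (y - 1)) / ((y powr (a+1) - 1) / (y - 1)) = Yf a y) (at 1 within {0..1})"
  proof -
    have "eventually (\<lambda>y. y \<noteq> 1) (at 1 within {0..1::real})" by (simp add: eventually_at_filter)
    thus ?thesis
    proof eventually_elim
      case (elim y)
      hence "y - 1 \<noteq> 0" by simp
      hence "((y powr a - 1) / (y - 1)) / ((y powr (a+1) - 1) / (y - 1)) = (y powr a - 1) / (y powr (a+1) - 1)"
        by (simp add: divide_simps)
      also have "\<dots> = (1 - y powr a) / (1 - y powr (a+1))"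
        by (metis minus_diff_eq minus_divide_divide)
      finally show ?case using elim by (simp add: Yf_def)
    qed
  qed
  ultimately have "(Yf a \<longlongrightarrow> a / (a+1)) (at 1 within {0..1})"
    by (rule Lim_transform_eventually)
  thus ?thesis by (simp add: Yf_def)
qed

lemma Yf_cont: "a > 0 \<Longrightarrow> continuous_on {0..1} (Yf a)"
  unfolding continuous_on_def
proof
  fix x :: real assume a: "a > 0" and x: "x \<in> {0..1}"
  show "(Yf a \<longlongrightarrow> Yf a x) (at x within {0..1})"
  proof (cases "x = 1")
    case True thus ?thesis using Yf_tendsto_1[OF a] by simp
  next
    case False thus ?thesis using Yf_tendsto_lt1[OF a, of x] x by auto
  qed
qed

lemma Yf_deriv:
  assumes a: "a > 0" and w: "0 < w" "w < 1"
  shows "(Yf a has_real_derivative Yd a w) (at w)"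
proof -
  have d: "1 - w powr (a+1) \<noteq> 0" using powr_lt1[of w "a+1"] w a by simp
  have "((\<lambda>w. (1 - w powr a) / (1 - w powr (a+1))) has_real_derivative Yd a w) (at w)"
    unfolding Yd_def
    by (intro DERIV_divide DERIV_diff DERIV_const has_real_derivative_powr DERIV_cmult w d)
  thus ?thesis
  proof (rule has_field_derivative_transform_within_open[where S="{0<..<1}"])
    show "open {0<..<(1::real)}" by simp
    show "w \<in> {0<..<1}" using w by simp
  qed (auto simp: Yf_def)
qed




lemma g_integral:
  assumes a: "a > 0"
  shows "(g a has_integral (1/2 + integral {0..1} (\<lambda>w. Yf a w ^ 2) / 2)) {0..1}"
proof -
  define J where "J = integral {0..1} (\<lambda>w. Yf a w ^ 2)"
  define X where "X w = w * Yf a w" for w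
  define X' where "X' w = Yf a w + w * Yd a w" for w
  define x1 where "x1 = x0 a"
  have x1p: "0 < x1" "x1 < 1" using a by (simp_all add: x1_def x0_def)
  have contY: "continuous_on {0..1} (Yf a)" using Yf_cont[OF a] .
  have contX: "continuous_on {0..1} X" unfolding X_def by (intro continuous_intros contY)
  have Y1: "Yf a 1 = x1" by (simp add: Yf_def x1_def x0_def)
  have X0: "X 0 = 0" by (simp add: X_def)
  have X1: "X 1 = x1" by (simp add: X_def Y1)
  have gX: "g a (X w) = Yf a w" if "w \<in> {0..1}" for w
    using g_X[OF a] that by (auto simp: X_def)
  have img: "X ` {0..1} = {0..x1}"
  proof
    show "X ` {0..1} \<subseteq> {0..x1}"
    proof
      fix y assume "y \<in> X ` {0..1}"
      then obtain w where w: "w \<in> {0..1}" "y = X w" by auto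
      have "0 \<le> X w" using w Yf_pos[OF a, of w] by (auto simp: X_def)
      moreover have "X w \<le> x1" using w X_le[OF a, of w] by (auto simp: X_def x1_def)
      ultimately show "y \<in> {0..x1}" using w by auto
    qed
  next
    show "{0..x1} \<subseteq> X ` {0..1}"
    proof
      fix y assume y: "y \<in> {0..x1}"
      have "\<exists>w. 0 \<le> w \<and> w \<le> 1 \<and> X w = y"
        by (rule IVT') (use y X0 X1 contX in auto)
      thus "y \<in> X ` {0..1}" by auto
    qed
  qed
  have inv: "\<forall>w\<in>{0..1}. (\<lambda>x. x / g a x) (X w) = w"
  proof
    fix w :: real assume w: "w \<in> {0..1}"
    have "Yf a w > 0" using Yf_pos[OF a] w by auto
    thus "(\<lambda>x. x / g a x) (X w) = w" using gX[OF w] by (simp add: X_def)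
  qed
  have cinv: "continuous_on (X ` {0..1}) (\<lambda>x. x / g a x)"
    by (rule continuous_on_inv[OF contX compact_Icc inv])
  have "(\<lambda>x. x / g a x) ` (X ` {0..1}) = {0..1}"
    using inv by (force simp: image_iff)
  hence cc1: "continuous_on (X ` {0..1}) (Yf a \<circ> (\<lambda>x. x / g a x))"
    by (intro continuous_on_compose cinv) (simp add: contY)
  have cc2: "\<And>x. x \<in> X ` {0..1} \<Longrightarrow> (Yf a \<circ> (\<lambda>x. x / g a x)) x = g a x"
    using inv gX by auto
  have "continuous_on (X ` {0..1}) (g a)"
    by (rule continuous_on_eq[OF cc1 cc2])
  hence gcont: "continuous_on {0..x1} (g a)" by (simp only: img)
  have deriv: "(X has_field_derivative X' w) (at w within {0..1})" if "w \<in> {0..1} - {0,1}" for w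
  proof -
    have w: "0 < w" "w < 1" using that by auto
    have "(X has_field_derivative (1 * Yf a w + Yd a w * w)) (at w)"
      unfolding X_def by (intro DERIV_mult DERIV_ident Yf_deriv[OF a w])
    moreover have "1 * Yf a w + Yd a w * w = X' w" by (simp add: X'_def mult.commute)
    ultimately have "(X has_field_derivative X' w) (at w)" by simp
    thus ?thesis by (rule has_field_derivative_at_within)
  qed
  have "((\<lambda>w. X' w *\<^sub>R g a (X w)) has_integral (integral {X 0..X 1} (g a) - integral {X 1..X 0} (g a))) {0..1}"
    by (rule has_integral_substitution_general[of "{0,1}" 0 1 X 0 x1 "g a" X'])
       (use img gcont contX deriv in auto)
  moreover have "{X 1..X 0} = {}" using X0 X1 x1p by auto
  ultimately have "((\<lambda>w. X' w *\<^sub>R g a (X w)) has_integral integral {0..x1} (g a)) {0..1}"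
    using X0 X1 by simp
  hence sub: "((\<lambda>w. X' w * Yf a w) has_integral integral {0..x1} (g a)) {0..1}"
    by (rule has_integral_eq[rotated]) (simp add: gX)
  define H where "H w = w * Yf a w ^ 2 / 2" for w
  have contH: "continuous_on {0..1} H" unfolding H_def by (intro continuous_intros contY) auto
  have ftc: "((\<lambda>w. Yf a w ^ 2 / 2 + w * Yf a w * Yd a w) has_integral (H 1 - H 0)) {0..1}"
  proof (rule fundamental_theorem_of_calculus_interior[OF _ contH])
    fix w :: real assume "w \<in> {0<..<1}"
    hence w: "0 < w" "w < 1" by auto
    have "(H has_field_derivative (1 * Yf a w ^ 2 + (of_nat 2 * (Yd a w * Yf a w ^ (2 - Suc 0))) * w) / 2) (at w)"
      unfolding H_def by (intro DERIV_cdivide DERIV_mult DERIV_ident DERIV_power Yf_deriv[OF a w]) 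
    hence "(H has_field_derivative (Yf a w ^ 2 / 2 + w * Yf a w * Yd a w)) (at w)"
      by (rule DERIV_cong) (simp add: algebra_simps power2_eq_square)
    thus "(H has_vector_derivative (Yf a w ^ 2 / 2 + w * Yf a w * Yd a w)) (at w)"
      by (simp add: has_real_derivative_iff_has_vector_derivative)
  qed simp
  have Hv: "H 1 - H 0 = x1^2 / 2" by (simp add: H_def Y1)
  have Y2: "((\<lambda>w. Yf a w ^ 2) has_integral J) {0..1}"
    unfolding J_def by (intro integrable_integral integrable_continuous_real continuous_intros contY)
  have "((\<lambda>w. (Yf a w ^ 2 / 2 + w * Yf a w * Yd a w) + Yf a w ^ 2 / 2) has_integral (x1^2/2 + J/2)) {0..1}"
    using has_integral_add[OF ftc has_integral_divide[OF Y2, of 2]] Hv by simp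
  hence "((\<lambda>w. X' w * Yf a w) has_integral (x1^2/2 + J/2)) {0..1}"
    by (rule has_integral_eq[rotated]) (simp add: X'_def algebra_simps power2_eq_square)
  hence ieq: "integral {0..x1} (g a) = x1^2/2 + J/2"
    using sub has_integral_unique by blast
  have int1: "(g a has_integral (x1^2/2 + J/2)) {0..x1}"
    using integrable_continuous_real[OF gcont] ieq by (metis has_integral_integral)
  have "((\<lambda>x. x) has_integral ((\<lambda>x. x^2/2) 1 - (\<lambda>x. x^2/2) x1)) {x1..1}"
  proof (rule fundamental_theorem_of_calculus)
    show "x1 \<le> 1" using x1p by simp
    fix x :: real assume "x \<in> {x1..1}"
    have "((\<lambda>x. x^2/2) has_field_derivative x) (at x within {x1..1})"
      by (auto intro!: derivative_eq_intros)
    thus "((\<lambda>x. x^2/2) has_vector_derivative x) (at x within {x1..1})"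
      by (simp add: has_real_derivative_iff_has_vector_derivative)
  qed
  hence "((\<lambda>x. x) has_integral (1/2 - x1^2/2)) {x1..1}" by simp
  hence "(g a has_integral (1/2 - x1^2/2)) {x1..1}"
    by (rule has_integral_eq[rotated]) (auto simp: g_right[OF a] x1_def)
  from has_integral_combine[OF _ _ int1 this] x1p
  have "(g a has_integral (x1^2/2 + J/2 + (1/2 - x1^2/2))) {0..1}" by simp
  thus ?thesis by (simp add: J_def add.commute)
qed




lemma term_int:
  fixes a :: real
  assumes a: "a > 0"
  shows "((\<lambda>w. real (Suc k) * (w powr (a+1)) ^ k * (1 - w powr a)^2) has_integral
      real (Suc k) * (1/((a+1)*real k+1) - 2/((a+1)*real k+a+1) + 1/((a+1)*real k+2*a+1))) {0..1}"
proof -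
  define c where "c = a + 1"
  have c: "c > 0" using a by (simp add: c_def)
  have i: "((\<lambda>w. w powr p) has_integral (1/(p+1))) {0..1}" if "p \<ge> 0" for p :: real
    using has_integral_powr_from_0[of p 1] that by simp
  have ck: "c * real k \<ge> 0" using c by simp
  have "((\<lambda>w. real (Suc k) * (w powr (c*k) - 2 * w powr (c*k+a) + w powr (c*k+2*a))) has_integral
      real (Suc k) * (1/(c*k+1) - 2 * (1/(c*k+a+1)) + 1/(c*k+2*a+1))) {0..1}"
    by (intro has_integral_mult_right has_integral_add has_integral_diff has_integral_cmul i)
       (use ck a in auto)
  hence "((\<lambda>w. real (Suc k) * (w powr (c*k) - 2 * w powr (c*k+a) + w powr (c*k+2*a))) has_integral
      real (Suc k) * (1/(c*k+1) - 2/(c*k+a+1) + 1/(c*k+2*a+1))) {0..1}" by simp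
  note prev = this
  have eqs: "real (Suc k) * (w powr c) ^ k * (1 - w powr a)^2 =
        real (Suc k) * (w powr (c*k) - 2 * w powr (c*k+a) + w powr (c*k+2*a))" if "w \<in> {0..1} - {0}" for w
  proof -
    from that have w: "w > 0" by auto
    have "(w powr c) ^ k = w powr (c*k)" using w by (simp add: powr_power mult.commute)
    moreover have "w powr (c*k+a) = w powr (c*k) * w powr a" "w powr (c*k+2*a) = w powr (c*k) * (w powr a * w powr a)"
      by (simp_all add: powr_add[symmetric])
    ultimately show ?thesis
      by (simp add: power2_eq_square algebra_simps)
  qed
  have "((\<lambda>w. real (Suc k) * (w powr c) ^ k * (1 - w powr a)^2) has_integral
      real (Suc k) * (1/(c*k+1) - 2/(c*k+a+1) + 1/(c*k+2*a+1))) {0..1}"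
    by (rule has_integral_spike_finite[of "{0}", OF _ eqs prev]) auto
  thus ?thesis by (simp add: c_def)
qed

lemma J_sums:
  fixes a :: real
  assumes a: "a > 0"
  shows "(\<lambda>k. real (Suc k) * (1/((a+1)*real k+1) - 2/((a+1)*real k+a+1) + 1/((a+1)*real k+2*a+1)))
      sums integral {0..1} (\<lambda>w. Yf a w ^ 2)"
proof -
  define t where "t k w = real (Suc k) * (w powr (a+1)) ^ k * (1 - w powr a)^2" for k w
  define u where "u k = real (Suc k) * (1/((a+1)*real k+1) - 2/((a+1)*real k+a+1) + 1/((a+1)*real k+2*a+1))" for k
  define P where "P n w = (\<Sum>k<n. t k w)" for n w
  define L where "L w = (if w < 1 then Yf a w ^ 2 else 0)" for w
  have ti: "(t k has_integral u k) {0..1}" for k unfolding t_def u_def by (rule term_int[OF a])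
  have Pi: "(P n has_integral (\<Sum>k<n. u k)) {0..1}" for n
    unfolding P_def by (intro has_integral_sum ti) auto
  have tnn: "t k w \<ge> 0" if "w \<ge> 0" for k w using that by (simp add: t_def)
  have tsums: "(\<lambda>k. t k w) sums L w" if w: "w \<in> {0..1}" for w
  proof (cases "w = 1")
    case True thus ?thesis by (simp add: t_def L_def)
  next
    case False
    hence w1: "0 \<le> w" "w < 1" using w by auto
    define z where "z = w powr (a+1)"
    have z: "0 \<le> z" "z < 1" using powr_lt1[OF w1, of "a+1"] a by (auto simp: z_def)
    have "(\<lambda>k. real (Suc k) * z ^ k) sums (1 / (1 - z)^2)"
      using geometric_deriv_sums[of z] z by simp
    hence "(\<lambda>k. real (Suc k) * z ^ k * (1 - w powr a)^2) sums (1 / (1 - z)^2 * (1 - w powr a)^2)"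
      by (rule sums_mult2)
    moreover have "1 / (1 - z)^2 * (1 - w powr a)^2 = L w"
      using False w1 by (simp add: L_def Yf_def z_def power_divide)
    ultimately show ?thesis by (simp add: t_def z_def)
  qed
  have Plim: "(\<lambda>n. P n w) \<longlonglongrightarrow> L w" if "w \<in> {0..1}" for w
    using tsums[OF that] unfolding P_def sums_def .
  have PleL: "P n w \<le> L w" if w: "w \<in> {0..1}" for n w
  proof -
    have "sum (\<lambda>k. t k w) {..<n} \<le> suminf (\<lambda>k. t k w)"
      by (rule sum_le_suminf) (use tsums[OF w] tnn w in \<open>auto simp: sums_iff\<close>)
    thus ?thesis using tsums[OF w] by (simp add: P_def sums_iff)
  qed
  have Y2int: "(\<lambda>w. Yf a w ^ 2) integrable_on {0..1}"
    by (intro integrable_continuous_real continuous_intros Yf_cont[OF a])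
  have Lint: "L integrable_on {0..1}"
    by (rule integrable_spike[OF Y2int, of "{1}"]) (auto simp: L_def)
  have LJ: "integral {0..1} L = integral {0..1} (\<lambda>w. Yf a w ^ 2)"
    by (rule integral_spike[of "{1}"]) (auto simp: L_def)
  have "L integrable_on {0..1} \<and> ((\<lambda>n. integral {0..1} (P n)) \<longlonglongrightarrow> integral {0..1} L)"
  proof (rule monotone_convergence_increasing)
    show "P k integrable_on {0..1}" for k using Pi by blast
    show "P k x \<le> P (Suc k) x" if "x \<in> {0..1}" for k x
      using tnn[of x k] that by (simp add: P_def)
    show "(\<lambda>k. P k x) \<longlonglongrightarrow> L x" if "x \<in> {0..1}" for x using Plim[OF that] .
    have "\<bar>integral {0..1} (P k)\<bar> \<le> integral {0..1} L" for k
    proof -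
      have "integral {0..1} (P k) \<ge> 0"
        by (rule integral_nonneg) (use Pi in \<open>auto simp: P_def intro!: sum_nonneg tnn\<close>)
      moreover have "integral {0..1} (P k) \<le> integral {0..1} L"
        by (rule integral_le) (use Pi Lint PleL in auto)
      ultimately show ?thesis by simp
    qed
    thus "bounded (range (\<lambda>k. integral {0..1} (P k)))"
      unfolding bounded_iff by auto
  qed
  note mc = this
  have "(\<lambda>n. \<Sum>k<n. u k) \<longlonglongrightarrow> integral {0..1} (\<lambda>w. Yf a w ^ 2)"
  proof -
    have "integral {0..1} (P n) = (\<Sum>k<n. u k)" for n using Pi[of n] by (rule integral_unique)
    thus ?thesis using mc LJ by simp
  qed
  thus ?thesis unfolding sums_def u_def .
qed




lemma inv_lin_lim:
  assumes c: "c > (0::real)"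
  shows "(\<lambda>k. 1 / (c * real k + x)) \<longlonglongrightarrow> 0"
proof -
  have "filterlim (\<lambda>k. x + c * real k) at_top sequentially"
    by (intro filterlim_tendsto_add_at_top[OF tendsto_const]
          filterlim_tendsto_pos_mult_at_top[OF tendsto_const c] filterlim_real_sequentially)
  hence "(\<lambda>k. inverse (x + c * real k)) \<longlonglongrightarrow> 0" by (rule tendsto_inverse_0_at_top)
  thus ?thesis by (simp add: divide_inverse add.commute)
qed

lemma tele:
  assumes c: "c > (0::real)"
  shows "(\<lambda>k. 1 / (c * real k + x) - 1 / (c * real k + c + x)) sums (1 / x)"
proof -
  have "(\<lambda>k. 1 / (c * real k + x) - 1 / (c * real (Suc k) + x)) sums (1 / (c * real 0 + x) - 0)"
    by (rule telescope_sums'[OF inv_lin_lim[OF c]])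
  thus ?thesis by (simp add: algebra_simps)
qed

lemma gamma_term:
  fixes a :: real
  assumes a: "a > 0"
  shows "Gamma (a * real (Suc n) + 1) * Gamma (a * real (Suc n) + real (Suc n) - 1)
       / (Gamma (a * real (Suc n) + real (Suc n) + 2) * Gamma (a * real (Suc n)))
     = (a / (2 * (a+1))) * (1 / ((a+1) * real n + a) - 1 / ((a+1) * real n + (a+1) + 1))"
proof -
  define N where "N = real (Suc n)"
  have N: "N \<ge> 1" by (simp add: N_def)
  define x where "x = a * N + N - 1"
  have aN: "a * N > 0" using a N by simp
  have x: "x > 0" using aN N by (simp add: x_def)
  have g1: "Gamma (a*N + 1) = a*N * Gamma (a*N)" using aN by (intro Gamma_plus1) auto
  have "Gamma (x + 1 + 1 + 1) = (x + 1 + 1) * Gamma (x + 1 + 1)" using x by (intro Gamma_plus1) auto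
  also have "Gamma (x + 1 + 1) = (x + 1) * Gamma (x + 1)" using x by (intro Gamma_plus1) auto
  also have "Gamma (x + 1) = x * Gamma x" using x by (intro Gamma_plus1) auto
  finally have g2: "Gamma (a * N + N + 2) = (x+2) * (x+1) * x * Gamma x"
    by (simp add: x_def algebra_simps)
  have g3: "Gamma (a * N + N - 1) = Gamma x" by (simp add: x_def)
  have pos: "Gamma x > 0" "Gamma (a*N) > 0" using x aN by auto
  have lhs: "Gamma (a*N + 1) * Gamma (a * N + N - 1) / (Gamma (a * N + N + 2) * Gamma (a*N))
      = a * N / ((x+2) * (x+1) * x)"
  proof -
    have d: "(x+2)*(x+1)*x > 0" using x by simp
    show ?thesis unfolding g1 g2 g3 using pos d
      by (simp add: divide_simps mult_ac)
  qed
  have r1: "(a+1) * real n + a = x" by (simp add: x_def N_def algebra_simps)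
  have r2: "(a+1) * real n + (a+1) + 1 = x + 2" by (simp add: x_def N_def algebra_simps)
  have r3: "x + 1 = (a+1) * N" by (simp add: x_def algebra_simps)
  have rhs: "(a / (2 * (a+1))) * (1 / ((a+1) * real n + a) - 1 / ((a+1) * real n + (a+1) + 1))
      = a * N / ((x+2) * (x+1) * x)"
  proof -
    have q: "1/x - 1/(x+2) = 2/(x*(x+2))" using x by (simp add: field_simps)
    have Np: "N > 0" using N by simp
    show ?thesis unfolding r1 r2 r3 q using x a Np by (simp add: divide_simps mult_ac) (simp add: algebra_simps)
  qed
  show ?thesis using lhs rhs by (simp add: N_def)
qed

lemma u_eq:
  fixes a :: real
  assumes a: "a > 0"
  shows "real (Suc k) * (1/((a+1)*real k+1) - 2/((a+1)*real k+a+1) + 1/((a+1)*real k+2*a+1))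
     = (a/(a+1)) * ((1/((a+1)*real k+1) - 1/((a+1)*real k+a)) + (1/((a+1)*real k+a) - 1/((a+1)*real k+(a+1)+a)))"
proof -
  define K where "K = real k"
  have K: "K \<ge> 0" by (simp add: K_def)
  have p1: "(a+1)*K+1 > 0" "(a+1)*K+a+1 > 0" "(a+1)*K+2*a+1 > 0" "(a+1)*K+a > 0"
    using a K by (simp_all add: add_nonneg_pos)
  have e: "(a+1)*K+(a+1)+a = (a+1)*K+2*a+1" by simp
  define c where "c = a + 1"
  have c: "c > 0" using a by (simp add: c_def)
  have D1: "(a+1)*K+1 = c*K+1" "(a+1)*K+a+1 = c*(K+1)" "(a+1)*K+2*a+1 = c*(K+1)+a"
    by (simp_all add: c_def algebra_simps)
  have q1: "c*K+1 > 0" "c*(K+1) > 0" "c*(K+1)+a > 0" using p1 D1 by auto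
  have s1: "(K+1)/(c*K+1) - (a/c)/(c*K+1) = 1/c"
    using q1 c by (simp add: divide_simps) (simp add: c_def algebra_simps)
  have s2: "2 * (K+1)/(c*(K+1)) = 2/c" using q1 c K by (simp add: divide_simps)
  have s3: "(K+1)/(c*(K+1)+a) + (a/c)/(c*(K+1)+a) = 1/c"
    using q1 c by (simp add: divide_simps)
  have "(K+1) * (1/((a+1)*K+1) - 2/((a+1)*K+a+1) + 1/((a+1)*K+2*a+1))
     = (a/(a+1)) * (1/((a+1)*K+1) - 1/((a+1)*K+2*a+1))"
  proof -
    have "(K+1) * (1/((a+1)*K+1) - 2/((a+1)*K+a+1) + 1/((a+1)*K+2*a+1))
        - (a/c) * (1/((a+1)*K+1) - 1/((a+1)*K+2*a+1))
      = ((K+1)/(c*K+1) - (a/c)/(c*K+1)) - 2 * (K+1)/(c*(K+1)) + ((K+1)/(c*(K+1)+a) + (a/c)/(c*(K+1)+a))"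
      unfolding D1 by (simp add: algebra_simps add_divide_distrib diff_divide_distrib)
    also have "\<dots> = 0" unfolding s1 s2 s3 by simp
    finally show ?thesis by (simp add: c_def)
  qed
  thus ?thesis unfolding of_nat_Suc K_def[symmetric] e by (simp add: algebra_simps)
qed




theorem mainTheorem7:
  fixes a :: real
  assumes "a > 0"
  shows "g a integrable_on {0..1} \<and>
    (\<lambda>n. Gamma (a * real (Suc n) + 1) * Gamma (a * real (Suc n) + real (Suc n) - 1)
              / (Gamma (a * real (Suc n) + real (Suc n) + 2) * Gamma (a * real (Suc n))))
           sums (1 - integral {0..1} (g a)) \<and>
    integral {0..1} (g a) =
           1 - a / (2 * (a + 1)) - a * pi / (2 * (a + 1)^2) * cot (a * pi / (a + 1))"
proof -
  have a: "a > 0" by fact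
  define c where "c = a + 1"
  have c: "c > 0" using a by (simp add: c_def)
  define A where "A = pi * cot (pi / c) / c"
  define J where "J = integral {0..1} (\<lambda>w. Yf a w ^ 2)"
  have gi: "(g a has_integral (1/2 + J/2)) {0..1}" using g_integral[OF a] by (simp add: J_def)
  hence int: "g a integrable_on {0..1}" and I: "integral {0..1} (g a) = 1/2 + J/2"
    by (auto simp: integral_unique has_integral_integrable)
  have ps: "(\<lambda>k. 1/(c*real k+1) - 1/(c*real k+a)) sums A"
    using p_sums[OF a] by (simp add: c_def A_def)
  have fs: "(\<lambda>k. 1/(c*real k+a) - 1/(c*real k+c+a)) sums (1/a)" by (rule tele[OF c])
  have es: "(\<lambda>k. 1/(c*real k+1) - 1/(c*real k+c+1)) sums (1/1)" by (rule tele[OF c])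
  have "(\<lambda>k. (a/c) * ((1/(c*real k+1) - 1/(c*real k+a)) + (1/(c*real k+a) - 1/(c*real k+c+a)))) sums ((a/c) * (A + 1/a))"
    by (intro sums_mult sums_add ps fs)
  moreover have "(\<lambda>k. (a/c) * ((1/(c*real k+1) - 1/(c*real k+a)) + (1/(c*real k+a) - 1/(c*real k+c+a)))) sums J"
    using J_sums[OF a] unfolding J_def u_eq[OF a] by (simp add: c_def)
  ultimately have Jeq: "J = (a/c) * (A + 1/a)" by (simp add: sums_unique2)
  have "(\<lambda>k. (a/(2*c)) * ((1/(c*real k+1) - 1/(c*real k+c+1)) - (1/(c*real k+1) - 1/(c*real k+a)))) sums ((a/(2*c)) * (1/1 - A))"
    by (intro sums_mult sums_diff es ps)
  moreover have "(\<lambda>k. (a/(2*c)) * ((1/(c*real k+1) - 1/(c*real k+c+1)) - (1/(c*real k+1) - 1/(c*real k+a))))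
     = (\<lambda>n. Gamma (a * real (Suc n) + 1) * Gamma (a * real (Suc n) + real (Suc n) - 1)
              / (Gamma (a * real (Suc n) + real (Suc n) + 2) * Gamma (a * real (Suc n))))"
    by (rule ext, subst gamma_term[OF a]) (simp add: c_def algebra_simps)
  moreover have "(a/(2*c)) * (1/1 - A) = 1 - integral {0..1} (g a)"
  proof -
    have aeq: "a = c - 1" by (simp add: c_def)
    have c1: "c \<noteq> 1" "c > 1" using a by (auto simp: c_def)
    show ?thesis unfolding I Jeq unfolding aeq using c a c1 by (simp add: field_simps)
  qed
  ultimately have S: "(\<lambda>n. Gamma (a * real (Suc n) + 1) * Gamma (a * real (Suc n) + real (Suc n) - 1)
              / (Gamma (a * real (Suc n) + real (Suc n) + 2) * Gamma (a * real (Suc n))))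
           sums (1 - integral {0..1} (g a))" by simp
  have ang: "a * pi / (a + 1) = pi - pi / c" using a by (simp add: c_def field_simps)
  have cot: "cot (a * pi / (a + 1)) = - cot (pi / c)" unfolding ang by (simp add: cot_def)
  have "integral {0..1} (g a) = 1 - a / (2 * (a + 1)) - a * pi / (2 * (a + 1)^2) * cot (a * pi / (a + 1))"
  proof -
    have aeq: "a = c - 1" by (simp add: c_def)
    have c1: "c \<noteq> 1" "c > 1" using a by (auto simp: c_def)
    have "1 - a / (2 * (a + 1)) - a * pi / (2 * (a + 1)^2) * cot (a * pi / (a + 1))
       = 1 - a / (2 * c) + a * pi / (2 * c^2) * cot (pi / c)" unfolding cot by (simp add: c_def)
    also have "\<dots> = 1/2 + J/2" unfolding Jeq A_def using c a c1 unfolding aeq by (simp add: field_simps power2_eq_square)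
    finally show ?thesis unfolding I by simp
  qed
  thus ?thesis using int S by blast
qed


end
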